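(* Let $G=H(T,C)$ be a generalized Halin graph such that $\kappa_{LLY}(u,v)>0$ for every edge $\{u,v\}$ of $G$, and let $x$ be a vertex of $T$ of maximum degree $D(T)$. If $T$ has exactly $D(T)$ leaves and $D(T)\ge 4$, then $d_T(x,y)\le 2$ for every vertex $y$ of $C$.
   Context: All graphs are finite, simple, undirected and connected; $d(\cdot,\cdot)$ is the shortest-path distance in $G$, $d_T(\cdot,\cdot)$ the distance in the tree $T$, and $d_v$ the degree of $v$. Lin-Lu-Yau curvature: for a vertex $v$ and $\alpha\in[0,1]$ let $m_v^\alpha(v)=\alpha$, $m_v^\alpha(u)=(1-\alpha)/d_v$ for neighbors $u$ of $v$, and $0$ elsewhere. For probability measures $m_1,m_2$, $W(m_1,m_2)=\inf_\pi\sum_{u,w}\pi(u,w)d(u,w)$ over couplings $\pi$ of $m_1,m_2$. For an edge $\{u,v\}$, $\kappa_\alpha(u,v)=1-W(m_u^\alpha,m_v^\alpha)$ and $\kappa_{LLY}(u,v)=\lim_{\alpha\to1}\kappa_\alpha(u,v)/(1-\alpha)$. A generalized Halin graph $H(T,C)$ is obtained from a tree $T$ with maximum degree $D(T)\ge3$ together with a planar embedding, by adding a cycle $C$ through all leaves of $T$ in the cyclic order in which they appear in the embedding. *)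

theory Defs
  imports "HOL-Analysis.Analysis"
begin

definition simple_graph :: "'a set \<Rightarrow> ('a \<Rightarrow> 'a \<Rightarrow> bool) \<Rightarrow> bool" where
  "simple_graph V adj \<longleftrightarrow> finite V \<and>
     (\<forall>u v. adj u v \<longrightarrow> u \<in> V \<and> v \<in> V \<and> u \<noteq> v \<and> adj v u)"

definition neighbors :: "'a set \<Rightarrow> ('a \<Rightarrow> 'a \<Rightarrow> bool) \<Rightarrow> 'a \<Rightarrow> 'a set" where
  "neighbors V adj v = {u \<in> V. adj v u}"

definition degree :: "'a set \<Rightarrow> ('a \<Rightarrow> 'a \<Rightarrow> bool) \<Rightarrow> 'a \<Rightarrow> nat" where
  "degree V adj v = card (neighbors V adj v)"

definition max_degree :: "'a set \<Rightarrow> ('a \<Rightarrow> 'a \<Rightarrow> bool) \<Rightarrow> nat" where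
  "max_degree V adj = Max (degree V adj ` V)"

definition is_walk :: "'a set \<Rightarrow> ('a \<Rightarrow> 'a \<Rightarrow> bool) \<Rightarrow> 'a list \<Rightarrow> bool" where
  "is_walk V adj xs \<longleftrightarrow> xs \<noteq> [] \<and> set xs \<subseteq> V \<and>
     (\<forall>i. Suc i < length xs \<longrightarrow> adj (xs ! i) (xs ! Suc i))"

definition connected_graph :: "'a set \<Rightarrow> ('a \<Rightarrow> 'a \<Rightarrow> bool) \<Rightarrow> bool" where
  "connected_graph V adj \<longleftrightarrow> V \<noteq> {} \<and>
     (\<forall>u\<in>V. \<forall>v\<in>V. \<exists>xs. is_walk V adj xs \<and> hd xs = u \<and> last xs = v)"

definition gdist :: "'a set \<Rightarrow> ('a \<Rightarrow> 'a \<Rightarrow> bool) \<Rightarrow> 'a \<Rightarrow> 'a \<Rightarrow> nat" where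
  "gdist V adj u v = (LEAST n. \<exists>xs. is_walk V adj xs \<and> hd xs = u \<and> last xs = v
                                   \<and> length xs = Suc n)"

definition is_cycle :: "'a set \<Rightarrow> ('a \<Rightarrow> 'a \<Rightarrow> bool) \<Rightarrow> 'a list \<Rightarrow> bool" where
  "is_cycle V adj xs \<longleftrightarrow> is_walk V adj xs \<and> distinct xs \<and> length xs \<ge> 3 \<and>
     adj (last xs) (hd xs)"

definition is_tree :: "'a set \<Rightarrow> ('a \<Rightarrow> 'a \<Rightarrow> bool) \<Rightarrow> bool" where
  "is_tree V adj \<longleftrightarrow> simple_graph V adj \<and> connected_graph V adj \<and>
     (\<nexists>xs. is_cycle V adj xs)"

definition is_leaf :: "'a set \<Rightarrow> ('a \<Rightarrow> 'a \<Rightarrow> bool) \<Rightarrow> 'a \<Rightarrow> bool" where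
  "is_leaf V adj v \<longleftrightarrow> v \<in> V \<and> degree V adj v = 1"

text \<open>A (combinatorial) planar embedding of a tree: at each vertex v, \<open>rot v\<close> is a
  cyclic permutation of the neighbours of v (the clockwise successor).\<close>
definition rotation_system :: "'a set \<Rightarrow> ('a \<Rightarrow> 'a \<Rightarrow> bool) \<Rightarrow> ('a \<Rightarrow> 'a \<Rightarrow> 'a) \<Rightarrow> bool" where
  "rotation_system V adj rot \<longleftrightarrow>
     (\<forall>v\<in>V. bij_betw (rot v) (neighbors V adj v) (neighbors V adj v) \<and>
        (\<forall>u\<in>neighbors V adj v. \<forall>w\<in>neighbors V adj v. \<exists>n. (rot v ^^ n) u = w))"

definition face_step :: "('a \<Rightarrow> 'a \<Rightarrow> 'a) \<Rightarrow> 'a \<times> 'a \<Rightarrow> 'a \<times> 'a" where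
  "face_step rot d = (snd d, rot (snd d) (fst d))"

text \<open>b is the next leaf after leaf a in the cyclic order in which leaves appear
  along the boundary walk of the embedded tree.\<close>
definition next_leaf :: "'a set \<Rightarrow> ('a \<Rightarrow> 'a \<Rightarrow> bool) \<Rightarrow> ('a \<Rightarrow> 'a \<Rightarrow> 'a) \<Rightarrow> 'a \<Rightarrow> 'a \<Rightarrow> bool" where
  "next_leaf V adj rot a b \<longleftrightarrow> is_leaf V adj a \<and> is_leaf V adj b \<and>
     (\<exists>p. adj p a \<and> (\<exists>n>0. snd ((face_step rot ^^ n) (p, a)) = b \<and>
        (\<forall>m. 0 < m \<and> m < n \<longrightarrow> \<not> is_leaf V adj (snd ((face_step rot ^^ m) (p, a))))))"

definition gen_halin :: "'a set \<Rightarrow> ('a \<Rightarrow> 'a \<Rightarrow> bool) \<Rightarrow> ('a \<Rightarrow> 'a \<Rightarrow> 'a) \<Rightarrow> bool" where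
  "gen_halin V tadj rot \<longleftrightarrow> is_tree V tadj \<and> rotation_system V tadj rot \<and>
     max_degree V tadj \<ge> 3"

text \<open>Adjacency of H(T,C): tree edges plus the cycle C through the leaves.\<close>
definition halin_adj :: "'a set \<Rightarrow> ('a \<Rightarrow> 'a \<Rightarrow> bool) \<Rightarrow> ('a \<Rightarrow> 'a \<Rightarrow> 'a) \<Rightarrow> 'a \<Rightarrow> 'a \<Rightarrow> bool" where
  "halin_adj V tadj rot u v \<longleftrightarrow> u \<noteq> v \<and>
     (tadj u v \<or> next_leaf V tadj rot u v \<or> next_leaf V tadj rot v u)"

definition lazy_measure :: "'a set \<Rightarrow> ('a \<Rightarrow> 'a \<Rightarrow> bool) \<Rightarrow> real \<Rightarrow> 'a \<Rightarrow> 'a \<Rightarrow> real" where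
  "lazy_measure V adj \<alpha> v x =
     (if x = v then \<alpha> else if x \<in> V \<and> adj v x then (1 - \<alpha>) / real (degree V adj v) else 0)"

definition is_coupling :: "'a set \<Rightarrow> ('a \<Rightarrow> real) \<Rightarrow> ('a \<Rightarrow> real) \<Rightarrow> ('a \<Rightarrow> 'a \<Rightarrow> real) \<Rightarrow> bool" where
  "is_coupling V m1 m2 \<pi> \<longleftrightarrow> (\<forall>u\<in>V. \<forall>w\<in>V. \<pi> u w \<ge> 0) \<and>
     (\<forall>u\<in>V. (\<Sum>w\<in>V. \<pi> u w) = m1 u) \<and> (\<forall>w\<in>V. (\<Sum>u\<in>V. \<pi> u w) = m2 w)"

definition wasserstein :: "'a set \<Rightarrow> ('a \<Rightarrow> 'a \<Rightarrow> bool) \<Rightarrow> ('a \<Rightarrow> real) \<Rightarrow> ('a \<Rightarrow> real) \<Rightarrow> real" where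
  "wasserstein V adj m1 m2 =
     Inf {(\<Sum>u\<in>V. \<Sum>w\<in>V. \<pi> u w * real (gdist V adj u w)) | \<pi>. is_coupling V m1 m2 \<pi>}"

definition kappa_alpha :: "'a set \<Rightarrow> ('a \<Rightarrow> 'a \<Rightarrow> bool) \<Rightarrow> real \<Rightarrow> 'a \<Rightarrow> 'a \<Rightarrow> real" where
  "kappa_alpha V adj \<alpha> u v =
     1 - wasserstein V adj (lazy_measure V adj \<alpha> u) (lazy_measure V adj \<alpha> v)"

definition kappa_LLY :: "'a set \<Rightarrow> ('a \<Rightarrow> 'a \<Rightarrow> bool) \<Rightarrow> 'a \<Rightarrow> 'a \<Rightarrow> real" where
  "kappa_LLY V adj u v = Lim (at_left 1) (\<lambda>\<alpha>. kappa_alpha V adj \<alpha> u v / (1 - \<alpha>))"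

end

theory Submission
  imports Defs
begin


definition cost :: "'a set \<Rightarrow> ('a \<Rightarrow> 'a \<Rightarrow> bool) \<Rightarrow> ('a \<Rightarrow> 'a \<Rightarrow> real) \<Rightarrow> real" where
  "cost V adj \<pi> = (\<Sum>u\<in>V. \<Sum>w\<in>V. \<pi> u w * real (gdist V adj u w))"

lemma sum_lazy:
  assumes sg: "simple_graph V adj" and v: "v \<in> V" and d: "degree V adj v > 0"
  shows "(\<Sum>u\<in>V. lazy_measure V adj \<alpha> v u) = 1"
proof -
  have fin: "finite V" using sg by (simp add: simple_graph_def)
  have nv: "\<not> adj v v" using sg by (auto simp: simple_graph_def)
  have V: "V = insert v (V - {v})" using v by auto
  have "(\<Sum>u\<in>V. lazy_measure V adj \<alpha> v u) = \<alpha> + (\<Sum>u\<in>V - {v}. lazy_measure V adj \<alpha> v u)"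
    using fin v by (subst V, subst sum.insert) (auto simp: lazy_measure_def)
  also have "(\<Sum>u\<in>V - {v}. lazy_measure V adj \<alpha> v u) =
      (\<Sum>u\<in>V - {v}. if u \<in> neighbors V adj v then (1 - \<alpha>) / real (degree V adj v) else 0)"
    by (rule sum.cong) (auto simp: lazy_measure_def neighbors_def)
  also have "\<dots> = (\<Sum>u\<in>neighbors V adj v. (1 - \<alpha>) / real (degree V adj v))"
  proof -
    have e: "(V - {v}) \<inter> neighbors V adj v = neighbors V adj v" using nv by (auto simp: neighbors_def)
    show ?thesis using fin by (subst sum.If_cases) (simp_all add: e)
  qed
  also have "\<dots> = 1 - \<alpha>" using d by (simp add: degree_def)
  finally show ?thesis by simp
qed

lemma lazy_nonneg: "0 \<le> \<alpha> \<Longrightarrow> \<alpha> \<le> 1 \<Longrightarrow> 0 \<le> lazy_measure V adj \<alpha> v u"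
  by (simp add: lazy_measure_def)

lemma coupling_ex:
  assumes sg: "simple_graph V adj" and x: "x \<in> V" "degree V adj x > 0"
    and a: "a \<in> V" "degree V adj a > 0" and al: "0 \<le> \<alpha>" "\<alpha> \<le> 1"
  shows "is_coupling V (lazy_measure V adj \<alpha> x) (lazy_measure V adj \<alpha> a)
     (\<lambda>u w. lazy_measure V adj \<alpha> x u * lazy_measure V adj \<alpha> a w)"
  unfolding is_coupling_def
  using sum_lazy[OF sg x, of \<alpha>] sum_lazy[OF sg a, of \<alpha>] lazy_nonneg[OF al]
  by (auto simp: sum_distrib_left[symmetric] sum_distrib_right[symmetric] intro!: mult_nonneg_nonneg)

lemma lazy_mix:
  assumes "\<alpha>2 = 1 - t * (1 - \<alpha>1)"
  shows "lazy_measure V adj \<alpha>2 v u = t * lazy_measure V adj \<alpha>1 v u + (1 - t) * (if u = v then 1 else 0)"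
  using assms by (auto simp: lazy_measure_def algebra_simps)

lemma cost_nonneg:
  assumes "is_coupling V m1 m2 \<pi>" shows "0 \<le> cost V adj \<pi>"
  using assms unfolding cost_def is_coupling_def by (auto intro!: sum_nonneg)

lemma kappa_le0:
  assumes sg: "simple_graph V G" and xV: "x \<in> V" and aV: "a \<in> V"
    and gd: "gdist V G x a = 1"
    and dx: "degree V G x > 0" and da: "degree V G a > 0"
    and low: "\<And>\<alpha> \<pi>. 0 \<le> \<alpha> \<Longrightarrow> \<alpha> < 1 \<Longrightarrow>
       is_coupling V (lazy_measure V G \<alpha> x) (lazy_measure V G \<alpha> a) \<pi> \<Longrightarrow> 1 \<le> cost V G \<pi>"
  shows "kappa_LLY V G x a \<le> 0"
proof -
  have fin: "finite V" using sg by (simp add: simple_graph_def)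
  define CS where "CS \<alpha> = {cost V G \<pi> | \<pi>. is_coupling V (lazy_measure V G \<alpha> x) (lazy_measure V G \<alpha> a) \<pi>}" for \<alpha>
  have W: "wasserstein V G (lazy_measure V G \<alpha> x) (lazy_measure V G \<alpha> a) = Inf (CS \<alpha>)" for \<alpha>
    unfolding wasserstein_def CS_def cost_def by simp
  have ne: "CS \<alpha> \<noteq> {}" if "0 \<le> \<alpha>" "\<alpha> \<le> 1" for \<alpha>
    using coupling_ex[OF sg xV dx aV da that] unfolding CS_def by blast
  have bdd: "bdd_below (CS \<alpha>)" for \<alpha>
    unfolding CS_def by (rule bdd_belowI[of _ 0]) (auto intro: cost_nonneg)
  define h where "h \<alpha> = kappa_alpha V G \<alpha> x a / (1 - \<alpha>)" for \<alpha>
  have hW: "h \<alpha> = (1 - Inf (CS \<alpha>)) / (1 - \<alpha>)" for \<alpha>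
    unfolding h_def kappa_alpha_def W by simp
  have W1: "1 \<le> Inf (CS \<alpha>)" if "0 \<le> \<alpha>" "\<alpha> < 1" for \<alpha>
    using that ne[of \<alpha>] by (intro cInf_greatest) (auto simp: CS_def intro: low)
  have hle: "h \<alpha> \<le> 0" if "0 \<le> \<alpha>" "\<alpha> < 1" for \<alpha>
    using W1[OF that] that by (simp add: hW divide_nonpos_pos)
  have mono: "h \<alpha>1 \<le> h \<alpha>2" if "0 \<le> \<alpha>1" "\<alpha>1 \<le> \<alpha>2" "\<alpha>2 < 1" for \<alpha>1 \<alpha>2
  proof -
    define t where "t = (1 - \<alpha>2) / (1 - \<alpha>1)"
    have t0: "0 < t" "t \<le> 1" using that by (auto simp: t_def)
    have al2: "\<alpha>2 = 1 - t * (1 - \<alpha>1)" using that by (simp add: t_def)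
    have key: "Inf (CS \<alpha>2) \<le> t * c + (1 - t)" if c: "c \<in> CS \<alpha>1" for c
    proof -
      obtain \<pi> where c: "c = cost V G \<pi>" and cp: "is_coupling V (lazy_measure V G \<alpha>1 x) (lazy_measure V G \<alpha>1 a) \<pi>"
        using c unfolding CS_def by blast
      define \<pi>2 where "\<pi>2 u w = t * \<pi> u w + (1 - t) * (if u = x \<and> w = a then 1 else 0)" for u w
      have s1: "(\<Sum>w\<in>V. (if u = x \<and> w = a then 1 else 0)) = (if u = x then 1 else (0::real))" for u
        using fin aV by (auto simp: sum.delta)
      have s2: "(\<Sum>u\<in>V. (if u = x \<and> w = a then 1 else 0)) = (if w = a then 1 else (0::real))" for w
        using fin xV by (auto simp: sum.delta)
      have cp2: "is_coupling V (lazy_measure V G \<alpha>2 x) (lazy_measure V G \<alpha>2 a) \<pi>2"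
        using cp t0 unfolding is_coupling_def \<pi>2_def
        by (auto simp: sum.distrib sum_distrib_left[symmetric] s1 s2 lazy_mix[OF al2] simp del: sum.delta)
      have "cost V G \<pi>2 = t * cost V G \<pi> + (1 - t) * real (gdist V G x a)"
      proof -
        have "cost V G \<pi>2 = (\<Sum>u\<in>V. \<Sum>w\<in>V. t * (\<pi> u w * real (gdist V G u w))
            + (1 - t) * (if u = x then (if w = a then real (gdist V G u w) else 0) else 0))"
          unfolding cost_def \<pi>2_def by (intro sum.cong refl) (auto simp: algebra_simps)
        also have "\<dots> = t * cost V G \<pi> + (1 - t) * real (gdist V G x a)"
        proof -
          have i: "(\<Sum>w\<in>V. (if u = x then (if w = a then real (gdist V G u w) else 0) else 0))
             = (if u = x then real (gdist V G x a) else 0)" for u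
            using fin aV by (cases "u = x") (simp_all add: sum.delta)
          show ?thesis using fin xV
            by (simp add: sum.distrib sum_distrib_left[symmetric] cost_def i sum.delta)
        qed
        finally show ?thesis .
      qed
      then have "cost V G \<pi>2 = t * c + (1 - t)" using gd c by simp
      moreover have "cost V G \<pi>2 \<in> CS \<alpha>2" using cp2 unfolding CS_def by blast
      ultimately show ?thesis using bdd[of \<alpha>2] by (metis cInf_lower)
    qed
    have "(Inf (CS \<alpha>2) - (1 - t)) / t \<le> Inf (CS \<alpha>1)"
    proof (rule cInf_greatest)
      show "CS \<alpha>1 \<noteq> {}" using ne[of \<alpha>1] that by simp
      fix c assume "c \<in> CS \<alpha>1"
      from key[OF this] show "(Inf (CS \<alpha>2) - (1 - t)) / t \<le> c" using t0
        by (simp add: pos_divide_le_eq mult.commute)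
    qed
    then have "Inf (CS \<alpha>2) \<le> t * Inf (CS \<alpha>1) + (1 - t)" using t0
      by (simp add: pos_divide_le_eq mult.commute)
    then have "t * (1 - Inf (CS \<alpha>1)) \<le> 1 - Inf (CS \<alpha>2)" by (simp add: algebra_simps)
    then show ?thesis using that unfolding hW t_def
      by (simp add: divide_simps mult.commute split: if_splits)
  qed
  define g where "g \<alpha> = h (max \<alpha> 0)" for \<alpha>
  have lim: "(g \<longlongrightarrow> Sup (g ` ({..<1} \<inter> UNIV))) (at 1 within ({..<1} \<inter> UNIV))"
    by (rule Lim_left_bound[where K=0]) (auto simp: g_def intro!: mono hle)
  have S0: "Sup (g ` ({..<1} \<inter> UNIV)) \<le> 0"
    by (rule cSup_least) (auto simp: g_def intro!: hle)
  have lim2: "(h \<longlongrightarrow> Sup (g ` ({..<1} \<inter> UNIV))) (at_left 1)"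
  proof -
    have "eventually (\<lambda>\<alpha>. g \<alpha> = h \<alpha>) (at_left (1::real))"
      unfolding eventually_at_left_real[of 0 1, simplified] g_def
      using eventually_at_left_real[of 0 "1::real"] by (auto elim!: eventually_mono)
    then show ?thesis using lim by (auto intro: tendsto_cong[THEN iffD1])
  qed
  have "kappa_LLY V G x a = Sup (g ` ({..<1} \<inter> UNIV))"
    unfolding kappa_LLY_def using lim2 unfolding h_def
    by (intro tendsto_Lim) auto
  then show ?thesis using S0 by simp
qed



lemma walk_Cons: "is_walk V E (a # xs) \<longleftrightarrow> a \<in> V \<and> (xs = [] \<or> (E a (hd xs) \<and> is_walk V E xs))"
proof (cases xs)
  case Nil then show ?thesis by (auto simp: is_walk_def)
next
  case (Cons b ys)
  show ?thesis
  proof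
    assume w: "is_walk V E (a # xs)"
    have "E a b" using w Cons unfolding is_walk_def by (metis Suc_less_eq length_Cons nth_Cons_0 nth_Cons_Suc zero_less_Suc)
    moreover have "is_walk V E xs" using w Cons unfolding is_walk_def
      by auto
    ultimately show "a \<in> V \<and> (xs = [] \<or> (E a (hd xs) \<and> is_walk V E xs))" using w Cons by (auto simp: is_walk_def)
  next
    assume h: "a \<in> V \<and> (xs = [] \<or> (E a (hd xs) \<and> is_walk V E xs))"
    then have h1: "E a b" "is_walk V E (b # ys)" using Cons by auto
    show "is_walk V E (a # xs)" unfolding is_walk_def Cons
    proof (intro conjI allI impI)
      show "set (a # b # ys) \<subseteq> V" using h h1 by (auto simp: is_walk_def)
      fix i assume "Suc i < length (a # b # ys)"
      then show "E ((a # b # ys) ! i) ((a # b # ys) ! Suc i)"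
        using h1 by (cases i) (auto simp: is_walk_def)
    qed simp
  qed
qed

fun nbw :: "('a \<Rightarrow> 'a \<Rightarrow> bool) \<Rightarrow> 'a list \<Rightarrow> bool" where
  "nbw E (a # b # c # xs) = (E a b \<and> a \<noteq> c \<and> nbw E (b # c # xs))"
| "nbw E [a, b] = E a b"
| "nbw E [a] = True"
| "nbw E [] = True"

lemma nbw_Cons: "nbw E (a # xs) \<longleftrightarrow> nbw E xs \<and> (xs \<noteq> [] \<longrightarrow> E a (hd xs)) \<and> (2 \<le> length xs \<longrightarrow> a \<noteq> xs ! 1)"
  by (cases xs; cases "tl xs") auto

lemma nbw_snoc: "nbw E (xs @ [w]) \<longleftrightarrow> nbw E xs \<and> (xs \<noteq> [] \<longrightarrow> E (last xs) w) \<and>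
    (2 \<le> length xs \<longrightarrow> xs ! (length xs - 2) \<noteq> w)"
proof (induction xs)
  case Nil then show ?case by simp
next
  case (Cons a xs)
  show ?case
  proof (cases xs)
    case Nil then show ?thesis by simp
  next
    case (Cons b ys)
    then show ?thesis using Cons.IH
      by (cases ys) (auto simp: nbw_Cons nth_append)
  qed
qed

lemma nbw_prefix: "nbw E (xs @ ys) \<Longrightarrow> nbw E xs"
proof (induction ys rule: rev_induct)
  case Nil then show ?case by simp
next
  case (snoc y ys) then show ?case using nbw_snoc[of E "xs @ ys" y] by simp
qed

lemma nbw_walk: "nbw E xs \<Longrightarrow> set xs \<subseteq> V \<Longrightarrow> xs \<noteq> [] \<Longrightarrow> is_walk V E xs"
proof (induction xs)
  case Nil then show ?case by simp
next
  case (Cons a xs)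
  then show ?case by (cases xs) (auto simp: walk_Cons nbw_Cons)
qed

lemma nbw_distinct:
  assumes acyc: "\<nexists>ys. is_cycle V E ys" and irr: "\<And>v. \<not> E v v"
  shows "nbw E xs \<Longrightarrow> set xs \<subseteq> V \<Longrightarrow> distinct xs"
proof (induction xs)
  case Nil then show ?case by simp
next
  case (Cons a ys)
  have d: "distinct ys" using Cons by (simp add: nbw_Cons)
  have "a \<notin> set ys"
  proof
    assume "a \<in> set ys"
    then obtain us vs where ys: "ys = us @ a # vs" and nu: "a \<notin> set us"
      by (metis split_list_first)
    have n1: "nbw E ((a # us) @ [a])" using Cons.prems(1) ys nbw_prefix[of E "(a # us) @ [a]" vs] by simp
    then have n2: "nbw E (a # us)" "E (last (a # us)) a"
      "2 \<le> length (a # us) \<Longrightarrow> (a # us) ! (length (a # us) - 2) \<noteq> a"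
      using nbw_snoc[of E "a # us" a] by blast+
    have "us \<noteq> []" using n2(2) irr by auto
    moreover have "length us \<noteq> 1"
    proof
      assume "length us = 1"
      then obtain u where "us = [u]" by (cases us) auto
      then show False using n2(3) by simp
    qed
    ultimately have len: "3 \<le> length (a # us)" by (cases us) (auto simp: Suc_le_eq)
    have "distinct (a # us)" using d ys nu by simp
    moreover have "is_walk V E (a # us)" using n2(1) Cons.prems(2) ys by (intro nbw_walk) auto
    ultimately have "is_cycle V E (a # us)" using len n2(2) by (simp add: is_cycle_def)
    then show False using acyc by blast
  qed
  then show ?case using d by simp
qed

lemma nbw_junction:
  assumes sym: "\<And>u v. E u v \<Longrightarrow> E v u"
  shows "nbw E (c # P) \<Longrightarrow> nbw E (c # Q) \<Longrightarrow> P \<noteq> [] \<Longrightarrow> Q \<noteq> [] \<Longrightarrow> hd P \<noteq> hd Q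
    \<Longrightarrow> nbw E (rev P @ c # Q)"
proof (induction P arbitrary: c Q)
  case Nil then show ?case by simp
next
  case (Cons p P)
  obtain q Q' where Q: "Q = q # Q'" using Cons.prems(4) by (cases Q) auto
  have cp: "E c p" using Cons.prems(1) by (cases P) auto
  have pc: "nbw E (p # c # Q)" using Cons.prems(2,5) sym[OF cp] Q by auto
  show ?case
  proof (cases P)
    case Nil then show ?thesis using pc by simp
  next
    case (Cons p' P'')
    have "nbw E (p # P)" "p' \<noteq> c" using Cons.prems(1) \<open>P = p' # P''\<close> by auto
    then have "nbw E (rev P @ p # c # Q)"
      using Cons.IH[of p "c # Q"] pc \<open>P = p' # P''\<close> by auto
    then show ?thesis by simp
  qed
qed

lemma nbw_diverge:
  assumes acyc: "\<nexists>ys. is_cycle V E ys" and irr: "\<And>v. \<not> E v v" and sym: "\<And>u v. E u v \<Longrightarrow> E v u"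
    and P: "nbw E (c # P)" "set (c # P) \<subseteq> V" "P \<noteq> []"
    and Q: "nbw E (c # Q)" "set (c # Q) \<subseteq> V" "Q \<noteq> []"
    and h: "hd P \<noteq> hd Q"
  shows "last P \<noteq> last Q"
proof -
  have "nbw E (rev P @ c # Q)" by (rule nbw_junction) (use sym P Q h in auto)
  then have "distinct (rev P @ c # Q)" using P Q by (intro nbw_distinct[OF acyc irr]) auto
  then have "set P \<inter> set Q = {}" by simp
  then show ?thesis using P(3) Q(3) by (metis disjoint_iff last_in_set)
qed

lemma nbw_extend:
  assumes fin: "finite V" and acyc: "\<nexists>ys. is_cycle V E ys" and irr: "\<And>v. \<not> E v v"
    and sym: "\<And>u v. E u v \<Longrightarrow> E v u" and inV: "\<And>u v. E u v \<Longrightarrow> u \<in> V"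
  shows "nbw E (xs @ [p, v]) \<Longrightarrow> set (xs @ [p, v]) \<subseteq> V \<Longrightarrow>
    \<exists>ys. nbw E (xs @ [p, v] @ ys) \<and> set ys \<subseteq> V \<and> is_leaf V E (last ((xs @ [p, v]) @ ys))"
proof (induction "card V - length xs" arbitrary: xs p v rule: less_induct)
  case less
  show ?case
  proof (cases "is_leaf V E v")
    case True then show ?thesis by (intro exI[of _ "[]"]) (use less.prems in auto)
  next
    case False
    have pv: "E p v" using less.prems(1) nbw_snoc[of E "xs @ [p]" v] by simp
    have finN: "finite (neighbors V E v)" using fin by (simp add: neighbors_def)
    have pN: "p \<in> neighbors V E v" using pv sym inV by (auto simp: neighbors_def)
    have vV: "v \<in> V" using less.prems(2) by simp
    have "degree V E v \<noteq> 1" using False vV by (simp add: is_leaf_def)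
    moreover have "degree V E v \<ge> 1" using finN pN unfolding degree_def
      by (metis One_nat_def card_0_eq empty_iff less_one linorder_not_less)
    ultimately have "2 \<le> card (neighbors V E v)" by (simp add: degree_def)
    then obtain w where wN: "w \<in> neighbors V E v" and wp: "w \<noteq> p"
      by (metis card_le_Suc0_iff_eq finN le_antisym not_less_eq_eq numeral_2_eq_2 pN)
    have vw: "E v w" "w \<in> V" using wN by (auto simp: neighbors_def)
    have n2: "nbw E ((xs @ [p]) @ [v, w])"
      using less.prems(1) vw wp nbw_snoc[of E "(xs @ [p]) @ [v]" w] by (simp add: nth_append)
    have s2: "set ((xs @ [p]) @ [v, w]) \<subseteq> V" using less.prems(2) vw by auto
    have "distinct ((xs @ [p]) @ [v, w])" by (rule nbw_distinct[OF acyc irr n2 s2])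
    then have "length ((xs @ [p]) @ [v, w]) \<le> card V"
      using s2 fin by (metis card_mono distinct_card)
    then have lt: "card V - length (xs @ [p]) < card V - length xs" by simp
    obtain ys where ys: "nbw E ((xs @ [p]) @ [v, w] @ ys)" "set ys \<subseteq> V"
        "is_leaf V E (last (((xs @ [p]) @ [v, w]) @ ys))"
      using less.hyps[OF lt, of v w] n2 s2 by auto
    show ?thesis using ys vw by (intro exI[of _ "w # ys"]) auto
  qed
qed



lemma leaf_nb_unique:
  assumes sg: "simple_graph V E" and l: "is_leaf V E a" and p: "E p a" and q: "E q a"
  shows "p = q"
proof -
  have "card (neighbors V E a) = 1" using l by (simp add: is_leaf_def degree_def)
  then obtain s where s: "neighbors V E a = {s}" by (metis card_1_singletonE)
  have "p \<in> neighbors V E a" "q \<in> neighbors V E a" using sg p q by (auto simp: neighbors_def simple_graph_def)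
  then show ?thesis using s by auto
qed

lemma next_leaf_fun:
  assumes sg: "simple_graph V E" and 1: "next_leaf V E rot a b1" and 2: "next_leaf V E rot a b2"
  shows "b1 = b2"
proof -
  obtain p1 n1 where p1: "E p1 a" "0 < n1" "snd ((face_step rot ^^ n1) (p1, a)) = b1"
      "\<And>m. 0 < m \<Longrightarrow> m < n1 \<Longrightarrow> \<not> is_leaf V E (snd ((face_step rot ^^ m) (p1, a)))"
    using 1 unfolding next_leaf_def by blast
  obtain p2 n2 where p2: "E p2 a" "0 < n2" "snd ((face_step rot ^^ n2) (p2, a)) = b2"
      "\<And>m. 0 < m \<Longrightarrow> m < n2 \<Longrightarrow> \<not> is_leaf V E (snd ((face_step rot ^^ m) (p2, a)))"
    using 2 unfolding next_leaf_def by blast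
  have la: "is_leaf V E a" "is_leaf V E b1" "is_leaf V E b2" using 1 2 by (auto simp: next_leaf_def)
  have "p1 = p2" using leaf_nb_unique[OF sg la(1) p1(1) p2(1)] .
  moreover have "n1 = n2"
  proof (rule ccontr)
    assume "n1 \<noteq> n2"
    then consider "n1 < n2" | "n2 < n1" by linarith
    then show False
    proof cases
      case 1 then show ?thesis using p2(4)[of n1] p1 la \<open>p1 = p2\<close> by auto
    next
      case 2 then show ?thesis using p1(4)[of n2] p2 la \<open>p1 = p2\<close> by auto
    qed
  qed
  ultimately show ?thesis using p1 p2 by simp
qed

definition dart :: "('a \<Rightarrow> 'a \<Rightarrow> bool) \<Rightarrow> 'a \<times> 'a \<Rightarrow> bool" where
  "dart E d \<longleftrightarrow> E (fst d) (snd d)"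

lemma face_step_dart:
  assumes sg: "simple_graph V E" and rs: "rotation_system V E rot" and d: "dart E d"
  shows "dart E (face_step rot d)"
proof -
  obtain u v where uv: "d = (u, v)" by fastforce
  have E: "E u v" using d uv by (simp add: dart_def)
  have vV: "v \<in> V" and uN: "u \<in> neighbors V E v" using sg E by (auto simp: simple_graph_def neighbors_def)
  have "bij_betw (rot v) (neighbors V E v) (neighbors V E v)" using rs vV by (simp add: rotation_system_def)
  then have "rot v u \<in> neighbors V E v" using uN by (metis bij_betw_apply)
  then show ?thesis using uv by (simp add: dart_def face_step_def neighbors_def)
qed

lemma face_step_pow_dart:
  assumes sg: "simple_graph V E" and rs: "rotation_system V E rot"
  shows "dart E d \<Longrightarrow> dart E ((face_step rot ^^ n) d)"
  by (induction n) (auto intro: face_step_dart[OF sg rs])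

lemma face_step_inj:
  assumes sg: "simple_graph V E" and rs: "rotation_system V E rot"
    and d1: "dart E d1" and d2: "dart E d2" and eq: "face_step rot d1 = face_step rot d2"
  shows "d1 = d2"
proof -
  obtain u1 v1 where 1: "d1 = (u1, v1)" by fastforce
  obtain u2 v2 where 2: "d2 = (u2, v2)" by fastforce
  have v: "v1 = v2" and r: "rot v1 u1 = rot v1 u2" using eq 1 2 by (auto simp: face_step_def)
  have vV: "v1 \<in> V" and uN: "u1 \<in> neighbors V E v1" "u2 \<in> neighbors V E v1"
    using sg d1 d2 1 2 v by (auto simp: simple_graph_def neighbors_def dart_def)
  have "bij_betw (rot v1) (neighbors V E v1) (neighbors V E v1)" using rs vV by (simp add: rotation_system_def)
  then have "u1 = u2" using uN r by (metis bij_betw_imp_inj_on inj_onD)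
  then show ?thesis using 1 2 v by simp
qed

lemma face_step_pow_inj:
  assumes sg: "simple_graph V E" and rs: "rotation_system V E rot"
  shows "dart E d1 \<Longrightarrow> dart E d2 \<Longrightarrow> (face_step rot ^^ n) d1 = (face_step rot ^^ n) d2 \<Longrightarrow> d1 = d2"
proof (induction n arbitrary: d1 d2)
  case 0 then show ?case by simp
next
  case (Suc n)
  have "face_step rot d1 = face_step rot d2"
    using Suc.IH[of "face_step rot d1" "face_step rot d2"] Suc.prems face_step_dart[OF sg rs]
    by (simp add: funpow_Suc_right del: funpow.simps)
  then show ?case using face_step_inj[OF sg rs] Suc.prems by blast
qed

lemma next_leaf_inj_aux:
  assumes sg: "simple_graph V E" and rs: "rotation_system V E rot"
    and 1: "next_leaf V E rot a1 b" and 2: "next_leaf V E rot a2 b"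
    and p1: "E p1 a1" "0 < n1" "snd ((face_step rot ^^ n1) (p1, a1)) = b"
    and p2: "E p2 a2" "0 < n2" "snd ((face_step rot ^^ n2) (p2, a2)) = b"
      "\<And>m. 0 < m \<Longrightarrow> m < n2 \<Longrightarrow> \<not> is_leaf V E (snd ((face_step rot ^^ m) (p2, a2)))"
    and le: "n1 \<le> n2"
  shows "a1 = a2"
proof -
  let ?F = "face_step rot"
  have la: "is_leaf V E a1" "is_leaf V E b" using 1 by (auto simp: next_leaf_def)
  have d1: "dart E (p1, a1)" and d2: "dart E (p2, a2)" using p1 p2 by (auto simp: dart_def)
  have e1: "dart E ((?F ^^ n1) (p1, a1))" using face_step_pow_dart[OF sg rs d1] .
  have e2: "dart E ((?F ^^ n2) (p2, a2))" using face_step_pow_dart[OF sg rs d2] .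
  have "fst ((?F ^^ n1) (p1, a1)) = fst ((?F ^^ n2) (p2, a2))"
    using leaf_nb_unique[OF sg la(2)] e1 e2 p1(3) p2(3) by (simp add: dart_def)
  then have eq: "(?F ^^ n1) (p1, a1) = (?F ^^ n2) (p2, a2)" using p1(3) p2(3) by (simp add: prod_eq_iff)
  define m where "m = n2 - n1"
  have "(?F ^^ n2) (p2, a2) = (?F ^^ n1) ((?F ^^ m) (p2, a2))"
    using le unfolding m_def by (metis le_add_diff_inverse funpow_add comp_apply)
  then have "(p1, a1) = (?F ^^ m) (p2, a2)"
    using face_step_pow_inj[OF sg rs d1 face_step_pow_dart[OF sg rs d2]] eq by simp
  then show ?thesis
  proof (cases "m = 0")
    case True then show ?thesis using \<open>(p1, a1) = (?F ^^ m) (p2, a2)\<close> by simp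
  next
    case False
    then have "0 < m" "m < n2" using p1(2) le by (auto simp: m_def)
    then have "\<not> is_leaf V E (snd ((?F ^^ m) (p2, a2)))" using p2(4) by blast
    then show ?thesis using la(1) \<open>(p1, a1) = (?F ^^ m) (p2, a2)\<close> by (metis snd_conv)
  qed
qed

lemma next_leaf_inj:
  assumes sg: "simple_graph V E" and rs: "rotation_system V E rot"
    and 1: "next_leaf V E rot a1 b" and 2: "next_leaf V E rot a2 b"
  shows "a1 = a2"
proof -
  obtain p1 n1 where p1: "E p1 a1" "0 < n1" "snd ((face_step rot ^^ n1) (p1, a1)) = b"
      "\<And>m. 0 < m \<Longrightarrow> m < n1 \<Longrightarrow> \<not> is_leaf V E (snd ((face_step rot ^^ m) (p1, a1)))"
    using 1 unfolding next_leaf_def by blast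
  obtain p2 n2 where p2: "E p2 a2" "0 < n2" "snd ((face_step rot ^^ n2) (p2, a2)) = b"
      "\<And>m. 0 < m \<Longrightarrow> m < n2 \<Longrightarrow> \<not> is_leaf V E (snd ((face_step rot ^^ m) (p2, a2)))"
    using 2 unfolding next_leaf_def by blast
  show ?thesis
  proof (cases "n1 \<le> n2")
    case True then show ?thesis using next_leaf_inj_aux[OF sg rs 1 2 p1(1-3) p2] by blast
  next
    case False
    then have "n2 \<le> n1" by simp
    then show ?thesis using next_leaf_inj_aux[OF sg rs 2 1 p2(1-3) p1] by simp
  qed
qed

section \<open>Distances\<close>

lemma gdist_walk:
  assumes "connected_graph V G" "u \<in> V" "v \<in> V"
  shows "\<exists>xs. is_walk V G xs \<and> hd xs = u \<and> last xs = v \<and> length xs = Suc (gdist V G u v)"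
proof -
  obtain xs where "is_walk V G xs" "hd xs = u" "last xs = v" using assms unfolding connected_graph_def by blast
  moreover have "length xs = Suc (length xs - 1)" using \<open>is_walk V G xs\<close> by (cases xs) (auto simp: is_walk_def)
  ultimately have ex: "\<exists>n xs. is_walk V G xs \<and> hd xs = u \<and> last xs = v \<and> length xs = Suc n" by blast
  show ?thesis unfolding gdist_def by (rule LeastI_ex) (use ex in blast)
qed

lemma gdist_le:
  "is_walk V G xs \<Longrightarrow> hd xs = u \<Longrightarrow> last xs = v \<Longrightarrow> length xs = Suc n \<Longrightarrow> gdist V G u v \<le> n"
  unfolding gdist_def by (rule Least_le) blast

lemma gdist_le1:
  assumes "connected_graph V G" "u \<in> V" "v \<in> V" "gdist V G u v \<le> 1"
  shows "u = v \<or> G u v"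
proof -
  obtain xs where xs: "is_walk V G xs" "hd xs = u" "last xs = v" "length xs = Suc (gdist V G u v)"
    using gdist_walk[OF assms(1-3)] by blast
  then consider "length xs = 1" | "length xs = 2" using assms(4) by linarith
  then show ?thesis
  proof cases
    case 1 then obtain p where "xs = [p]" by (cases xs) auto
    then show ?thesis using xs by simp
  next
    case 2 then obtain p q where "xs = [p, q]" by (cases xs; cases "tl xs") auto
    then show ?thesis using xs by (simp add: walk_Cons)
  qed
qed

lemma gdist_le2:
  assumes "connected_graph V G" "u \<in> V" "v \<in> V" "gdist V G u v \<le> 2"
  shows "u = v \<or> G u v \<or> (\<exists>w. G u w \<and> G w v)"
proof -
  obtain xs where xs: "is_walk V G xs" "hd xs = u" "last xs = v" "length xs = Suc (gdist V G u v)"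
    using gdist_walk[OF assms(1-3)] by blast
  then consider "length xs = 1" | "length xs = 2" | "length xs = 3" using assms(4) by linarith
  then show ?thesis
  proof cases
    case 1 then obtain p where "xs = [p]" by (cases xs) auto
    then show ?thesis using xs by simp
  next
    case 2 then obtain p q where "xs = [p, q]" by (cases xs; cases "tl xs") auto
    then show ?thesis using xs by (simp add: walk_Cons)
  next
    case 3 then obtain p q r where "xs = [p, q, r]" by (cases xs; cases "tl xs"; cases "tl (tl xs)") auto
    then show ?thesis using xs by (auto simp: walk_Cons)
  qed
qed

lemma walk_append_tl:
  "is_walk V G xs \<Longrightarrow> is_walk V G ys \<Longrightarrow> last xs = hd ys \<Longrightarrow> is_walk V G (xs @ tl ys)"
proof (induction xs)
  case Nil then show ?case by (simp add: is_walk_def)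
next
  case (Cons a r)
  show ?case
  proof (cases "r = []")
    case True then show ?thesis using Cons.prems by (cases ys) auto
  next
    case False then show ?thesis using Cons by (auto simp: walk_Cons)
  qed
qed

lemma gdist_tri:
  assumes c: "connected_graph V G" and "u \<in> V" "v \<in> V" "w \<in> V"
  shows "gdist V G u w \<le> gdist V G u v + gdist V G v w"
proof -
  obtain xs where xs: "is_walk V G xs" "hd xs = u" "last xs = v" "length xs = Suc (gdist V G u v)"
    using gdist_walk[OF c assms(2,3)] by blast
  obtain ys where ys: "is_walk V G ys" "hd ys = v" "last ys = w" "length ys = Suc (gdist V G v w)"
    using gdist_walk[OF c assms(3,4)] by blast
  have w: "is_walk V G (xs @ tl ys)" using walk_append_tl xs ys by metis
  have ne: "xs \<noteq> []" "ys \<noteq> []" using xs ys by (auto simp: is_walk_def)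
  have "hd (xs @ tl ys) = u" using xs ne by simp
  moreover have "last (xs @ tl ys) = w"
    using xs ys ne by (cases ys) auto
  moreover have "length (xs @ tl ys) = Suc (gdist V G u v + gdist V G v w)" using xs ys by simp
  ultimately show ?thesis using gdist_le[OF w] by blast
qed

lemma cost_lower:
  assumes cp: "is_coupling V m1 m2 \<pi>" and fin: "finite V"
    and lip: "\<And>u w. u \<in> V \<Longrightarrow> w \<in> V \<Longrightarrow> f u - f w \<le> real (gdist V G u w)"
  shows "(\<Sum>u\<in>V. m1 u * f u) - (\<Sum>w\<in>V. m2 w * f w) \<le> cost V G \<pi>"
proof -
  have "(\<Sum>u\<in>V. m1 u * f u) - (\<Sum>w\<in>V. m2 w * f w) =
      (\<Sum>u\<in>V. \<Sum>w\<in>V. \<pi> u w * f u) - (\<Sum>w\<in>V. \<Sum>u\<in>V. \<pi> u w * f w)"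
  proof -
    have a: "(\<Sum>u\<in>V. m1 u * f u) = (\<Sum>u\<in>V. \<Sum>w\<in>V. \<pi> u w * f u)"
      using cp by (auto simp: is_coupling_def sum_distrib_right[symmetric] intro!: sum.cong)
    have b: "(\<Sum>w\<in>V. m2 w * f w) = (\<Sum>w\<in>V. \<Sum>u\<in>V. \<pi> u w * f w)"
      using cp by (auto simp: is_coupling_def sum_distrib_right[symmetric] intro!: sum.cong)
    show ?thesis using a b by simp
  qed
  also have "\<dots> = (\<Sum>u\<in>V. \<Sum>w\<in>V. \<pi> u w * (f u - f w))"
    by (subst sum.swap[of _ V V]) (simp add: sum_subtractf[symmetric] algebra_simps)
  also have "\<dots> \<le> cost V G \<pi>" unfolding cost_def
    using cp lip unfolding is_coupling_def by (intro sum_mono mult_left_mono) auto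
  finally show ?thesis .
qed

lemma sum_lazy_f:
  assumes sg: "simple_graph V adj" and v: "v \<in> V"
  shows "(\<Sum>u\<in>V. lazy_measure V adj \<alpha> v u * f u) =
     \<alpha> * f v + (1 - \<alpha>) / real (degree V adj v) * (\<Sum>u\<in>neighbors V adj v. f u)"
proof -
  have fin: "finite V" using sg by (simp add: simple_graph_def)
  have nv: "\<not> adj v v" using sg by (auto simp: simple_graph_def)
  have V: "V = insert v (V - {v})" using v by auto
  have "(\<Sum>u\<in>V. lazy_measure V adj \<alpha> v u * f u) = \<alpha> * f v + (\<Sum>u\<in>V - {v}. lazy_measure V adj \<alpha> v u * f u)"
    using fin v by (subst V, subst sum.insert) (auto simp: lazy_measure_def)
  also have "(\<Sum>u\<in>V - {v}. lazy_measure V adj \<alpha> v u * f u) =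
      (\<Sum>u\<in>V - {v}. if u \<in> neighbors V adj v then (1 - \<alpha>) / real (degree V adj v) * f u else 0)"
    by (rule sum.cong) (auto simp: lazy_measure_def neighbors_def)
  also have "\<dots> = (\<Sum>u\<in>neighbors V adj v. (1 - \<alpha>) / real (degree V adj v) * f u)"
  proof -
    have e: "(V - {v}) \<inter> neighbors V adj v = neighbors V adj v" using nv by (auto simp: neighbors_def)
    show ?thesis using fin by (subst sum.If_cases) (simp_all add: e)
  qed
  finally show ?thesis by (simp add: sum_distrib_left)
qed



lemma walk_mono: "is_walk V E xs \<Longrightarrow> (\<And>u v. E u v \<Longrightarrow> E' u v) \<Longrightarrow> is_walk V E' xs"
  by (auto simp: is_walk_def)

lemma gdist_0:
  assumes "connected_graph V G" "u \<in> V" "v \<in> V" "gdist V G u v = 0"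
  shows "u = v"
proof -
  obtain xs where xs: "is_walk V G xs" "hd xs = u" "last xs = v" "length xs = Suc (gdist V G u v)"
    using gdist_walk[OF assms(1-3)] by blast
  then obtain p where "xs = [p]" using assms(4) by (cases xs) auto
  then show ?thesis using xs by simp
qed

theorem corollary3p3:
  fixes V :: "'a set" and tadj :: "'a \<Rightarrow> 'a \<Rightarrow> bool" and rot :: "'a \<Rightarrow> 'a \<Rightarrow> 'a" and x :: 'a
  assumes "gen_halin V tadj rot"
    and "\<forall>u v. halin_adj V tadj rot u v \<longrightarrow> kappa_LLY V (halin_adj V tadj rot) u v > 0"
    and "x \<in> V" and "degree V tadj x = max_degree V tadj"
    and "card {v \<in> V. is_leaf V tadj v} = max_degree V tadj"
    and "max_degree V tadj \<ge> 4"
  shows "\<forall>y\<in>V. is_leaf V tadj y \<longrightarrow> gdist V tadj x y \<le> 2"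
proof (rule ccontr)
  assume "\<not> ?thesis"
  then obtain y where yV: "y \<in> V" and yl: "is_leaf V tadj y" and gy: "\<not> gdist V tadj x y \<le> 2" by blast
  let ?H = "halin_adj V tadj rot"
  define D where "D = max_degree V tadj"
  have xV: "x \<in> V" using assms(3) .
  have tree: "is_tree V tadj" and rs: "rotation_system V tadj rot" using assms(1) by (auto simp: gen_halin_def)
  have sg: "simple_graph V tadj" and con: "connected_graph V tadj" and acyc: "\<nexists>ys. is_cycle V tadj ys"
    using tree by (auto simp: is_tree_def)
  have fin: "finite V" using sg by (simp add: simple_graph_def)
  have sym: "\<And>u v. tadj u v \<Longrightarrow> tadj v u" and irr: "\<And>v. \<not> tadj v v"
    and inV: "\<And>u v. tadj u v \<Longrightarrow> u \<in> V" "\<And>u v. tadj u v \<Longrightarrow> v \<in> V"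
    using sg by (auto simp: simple_graph_def)
  have degx: "degree V tadj x = D" using assms(4) D_def by simp
  have D4: "4 \<le> D" using assms(6) D_def by simp
  have cardL: "card {v \<in> V. is_leaf V tadj v} = D" using assms(5) D_def by simp
  have div: "last P \<noteq> last Q" if "nbw tadj (c # P)" "set (c # P) \<subseteq> V" "P \<noteq> []"
      "nbw tadj (c # Q)" "set (c # Q) \<subseteq> V" "Q \<noteq> []" "hd P \<noteq> hd Q" for c P Q
    by (rule nbw_diverge[of V tadj]) (use acyc irr sym that in auto)
  have ext: "\<exists>ys. nbw tadj (xs @ [p, v] @ ys) \<and> set ys \<subseteq> V \<and> is_leaf V tadj (last ((xs @ [p, v]) @ ys))"
    if "nbw tadj (xs @ [p, v])" "set (xs @ [p, v]) \<subseteq> V" for xs p v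
    by (rule nbw_extend[of V tadj]) (use fin acyc irr sym inV that in auto)
  obtain sw where sw: "is_walk V tadj sw" "hd sw = x" "last sw = y" "length sw = Suc (gdist V tadj x y)"
    using gdist_walk[OF con xV yV] by blast
  have "4 \<le> length sw" using sw gy by simp
  then obtain s0 a b c rest where swe: "sw = s0 # a # b # c # rest"
    by (auto simp: numeral_eq_Suc Suc_le_length_iff)
  have s0: "s0 = x" using sw swe by simp
  have wk: "tadj x a" "tadj a b" "tadj b c" "is_walk V tadj (b # c # rest)" "is_walk V tadj (c # rest)"
    "a \<in> V" "b \<in> V" "c \<in> V"
    using sw(1) swe s0 by (auto simp: walk_Cons)
  have lst: "last (c # rest) = y" using sw swe by simp
  have glen: "gdist V tadj x y = 3 + length rest" using sw swe by simp
  have xb: "x \<noteq> b"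
  proof
    assume "x = b"
    then have "gdist V tadj x y \<le> Suc (length rest)"
      using gdist_le[OF wk(4)] lst by simp
    then show False using glen by simp
  qed
  have nxb: "\<not> tadj x b"
  proof
    assume "tadj x b"
    then have "is_walk V tadj (x # b # c # rest)" using wk xV by (simp add: walk_Cons)
    then have "gdist V tadj x y \<le> Suc (Suc (length rest))"
      using gdist_le lst by fastforce
    then show False using glen by simp
  qed
  have ac: "a \<noteq> c"
  proof
    assume "a = c"
    then have "is_walk V tadj (x # c # rest)" using wk xV by (simp add: walk_Cons)
    then have "gdist V tadj x y \<le> Suc (length rest)"
      using gdist_le lst by fastforce
    then show False using glen by simp
  qed
  have xa: "x \<noteq> a" using wk irr by blast
  have ab: "a \<noteq> b" using wk irr by blast
  define NX where "NX = neighbors V tadj x"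
  define Z where "Z = NX - {a}"
  have aNX: "a \<in> NX" using wk by (simp add: NX_def neighbors_def)
  have finNX: "finite NX" using fin by (simp add: NX_def neighbors_def)
  have cardZ: "card Z = D - 1" using aNX finNX degx by (simp add: Z_def NX_def degree_def)
  have finZ: "finite Z" using finNX by (simp add: Z_def)
  have Zp: "tadj x z" "z \<in> V" "z \<noteq> a" "z \<noteq> x" if "z \<in> Z" for z
    using that irr by (auto simp: Z_def NX_def neighbors_def)
  have "\<forall>z\<in>Z. \<exists>ws. nbw tadj (x # z # ws) \<and> set ws \<subseteq> V \<and> is_leaf V tadj (last (z # ws))"
  proof
    fix z assume z: "z \<in> Z"
    from ext[of "[]" x z] Zp[OF z] xV show "\<exists>ws. nbw tadj (x # z # ws) \<and> set ws \<subseteq> V \<and> is_leaf V tadj (last (z # ws))"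
      by simp
  qed
  then obtain W where W: "\<And>z. z \<in> Z \<Longrightarrow> nbw tadj (x # z # W z) \<and> set (W z) \<subseteq> V \<and> is_leaf V tadj (last (z # W z))"
    by metis
  define ell where "ell z = last (z # W z)" for z
  have injl: "inj_on ell Z"
  proof (rule inj_onI)
    fix z1 z2 assume z: "z1 \<in> Z" "z2 \<in> Z" "ell z1 = ell z2"
    show "z1 = z2"
    proof (rule ccontr)
      assume "z1 \<noteq> z2"
      then have "last (z1 # W z1) \<noteq> last (z2 # W z2)"
        using div[of x "z1 # W z1" "z2 # W z2"] W[OF z(1)] W[OF z(2)] Zp[OF z(1)] Zp[OF z(2)] xV by auto
      then show False using z(3) by (simp add: ell_def)
    qed
  qed
  obtain Wb where Wb: "nbw tadj (x # a # b # Wb)" "set Wb \<subseteq> V" "is_leaf V tadj (last (b # Wb))"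
    using ext[of "[x]" a b] wk xb xV by auto
  define lb where "lb = last (b # Wb)"
  have ell_ne: "last (a # w # ws) \<noteq> ell z" if "z \<in> Z" "nbw tadj (x # a # w # ws)" "set ws \<subseteq> V" "w \<in> V"
    for z w ws
    using div[of x "a # w # ws" "z # W z"] that W[OF that(1)] Zp[OF that(1)] xV wk
    by (auto simp: ell_def)
  have lbZ: "lb \<notin> ell ` Z"
  proof
    assume "lb \<in> ell ` Z"
    then obtain z where z: "z \<in> Z" "lb = ell z" by blast
    show False using ell_ne[OF z(1) Wb(1,2) wk(7)] z(2) by (simp add: lb_def)
  qed
  define L where "L = {v \<in> V. is_leaf V tadj v}"
  have finL: "finite L" using fin by (simp add: L_def)
  have lfl: "is_leaf V tadj lb" using Wb(3) by (simp add: lb_def)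
  have lfz: "is_leaf V tadj (ell z)" if "z \<in> Z" for z using W[OF that] by (simp add: ell_def)
  have sub: "insert lb (ell ` Z) \<subseteq> L"
    using lfl lfz unfolding L_def is_leaf_def by blast
  have "card (insert lb (ell ` Z)) = D"
    using lbZ injl finZ cardZ D4 by (simp add: card_image)
  then have Leq: "L = insert lb (ell ` Z)"
    using card_subset_eq[OF finL sub] cardL by (simp add: L_def)
  have NA: "neighbors V tadj a = {x, b}"
  proof
    show "{x, b} \<subseteq> neighbors V tadj a" using wk xV sym by (auto simp: neighbors_def)
    show "neighbors V tadj a \<subseteq> {x, b}"
    proof
      fix b' assume b': "b' \<in> neighbors V tadj a"
      show "b' \<in> {x, b}"
      proof (rule ccontr)
        assume nb: "b' \<notin> {x, b}"
        have ab': "tadj a b'" "b' \<in> V" using b' by (auto simp: neighbors_def)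
        obtain Wb' where Wb': "nbw tadj (x # a # b' # Wb')" "set Wb' \<subseteq> V" "is_leaf V tadj (last (b' # Wb'))"
          using ext[of "[x]" a b'] wk ab' nb xV by auto
        have "last (b' # Wb') \<in> L" using Wb' by (auto simp: L_def is_leaf_def)
        moreover have "last (b' # Wb') \<notin> ell ` Z"
        proof
          assume "last (b' # Wb') \<in> ell ` Z"
          then obtain z where z: "z \<in> Z" "last (b' # Wb') = ell z" by blast
          show False using ell_ne[OF z(1) Wb'(1,2) ab'(2)] z(2) by simp
        qed
        moreover have "last (b' # Wb') \<noteq> lb"
          using div[of a "b' # Wb'" "b # Wb"] Wb Wb' wk ab' nb by (auto simp: lb_def nbw_Cons)
        ultimately show False using Leq by auto
      qed
    qed
  qed
  have dega: "degree V tadj a = 2" using NA xb by (simp add: degree_def)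
  have nla: "\<not> is_leaf V tadj a" using dega by (simp add: is_leaf_def)
  have nlx: "\<not> is_leaf V tadj x" using degx D4 by (simp add: is_leaf_def)
  have nlb: "\<not> is_leaf V tadj b"
  proof -
    have "{a, c} \<subseteq> neighbors V tadj b" using wk sym by (auto simp: neighbors_def)
    then have "card {a, c} \<le> degree V tadj b" unfolding degree_def
      by (rule card_mono[rotated]) (use fin in \<open>simp add: neighbors_def\<close>)
    then show ?thesis using ac by (simp add: is_leaf_def)
  qed
  have Hnl: "?H u v \<longleftrightarrow> tadj u v" if "\<not> is_leaf V tadj u" for u v
    using that irr by (auto simp: halin_adj_def next_leaf_def)
  have Hsym: "?H u v \<Longrightarrow> ?H v u" for u v using sym by (auto simp: halin_adj_def)
  have Hsg: "simple_graph V ?H"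
    using fin inV sym unfolding simple_graph_def halin_adj_def next_leaf_def is_leaf_def by blast
  have Hcon: "connected_graph V ?H"
    using con unfolding connected_graph_def
    by (metis (no_types, lifting) walk_mono halin_adj_def irr)
  have NHx: "neighbors V ?H x = NX" using Hnl[OF nlx] by (simp add: NX_def neighbors_def)
  have NHa: "neighbors V ?H a = {x, b}" using Hnl[OF nla] NA by (simp add: neighbors_def)
  have dHx: "degree V ?H x = D" using NHx degx by (simp add: degree_def NX_def)
  have dHa: "degree V ?H a = 2" using NHa xb by (simp add: degree_def)
  have Hxa: "?H x a" using Hnl[OF nlx] wk by simp
  have Hab: "?H a b" using Hnl[OF nla] wk by simp
  have gxa: "gdist V ?H x a = 1"
  proof -
    have "gdist V ?H x a \<le> 1" using gdist_le[of V ?H "[x, a]"] Hxa xV wk by (simp add: walk_Cons)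
    moreover have "gdist V ?H x a \<noteq> 0" using gdist_0[OF Hcon xV wk(6)] xa by auto
    ultimately show ?thesis by simp
  qed
  define f where "f v = real (min 3 (gdist V ?H v b))" for v
  have fb: "f b = 0" using gdist_le[of V ?H "[b]" b b 0] wk by (simp add: f_def walk_Cons)
  have fa: "f a = 1"
  proof -
    have "gdist V ?H a b \<le> 1" using gdist_le[of V ?H "[a, b]"] Hab wk by (simp add: walk_Cons)
    moreover have "gdist V ?H a b \<noteq> 0" using gdist_0[OF Hcon wk(6,7)] ab by auto
    ultimately show ?thesis by (simp add: f_def)
  qed
  have fx: "f x = 2"
  proof -
    have "gdist V ?H x b \<le> 2" using gdist_le[of V ?H "[x, a, b]"] Hab Hxa wk xV by (simp add: walk_Cons)
    moreover have "\<not> gdist V ?H x b \<le> 1"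
    proof
      assume "gdist V ?H x b \<le> 1"
      from gdist_le1[OF Hcon xV wk(7) this] show False using xb nxb Hnl[OF nlx] by auto
    qed
    ultimately show ?thesis by (simp add: f_def)
  qed
  have zb: "z \<noteq> b \<and> \<not> ?H z b" if z: "z \<in> Z" for z
  proof -
    have "z \<noteq> b" using Zp[OF z] nxb by auto
    moreover have "\<not> ?H z b"
    proof
      assume "?H z b"
      then have "tadj b z" using Hsym Hnl[OF nlb] by blast
      then have "is_cycle V tadj [x, a, b, z]"
        using wk xV Zp[OF z] xb xa ab \<open>z \<noteq> b\<close> sym by (auto simp: is_cycle_def walk_Cons)
      then show False using acyc by blast
    qed
    ultimately show ?thesis by blast
  qed
  have fz: "2 \<le> f z" if z: "z \<in> Z" for z
  proof -
    have "\<not> gdist V ?H z b \<le> 1"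
    proof
      assume "gdist V ?H z b \<le> 1"
      from gdist_le1[OF Hcon Zp(2)[OF z] wk(7) this] show False using zb[OF z] by auto
    qed
    then show ?thesis by (simp add: f_def)
  qed
  have "\<exists>z0\<in>Z. 3 \<le> gdist V ?H z0 b"
  proof (rule ccontr)
    assume "\<not> ?thesis"
    then have le2: "gdist V ?H z b \<le> 2" if "z \<in> Z" for z using that by force
    have nl: "next_leaf V tadj rot z lb \<or> next_leaf V tadj rot lb z" if z: "z \<in> Z" for z
    proof -
      obtain w where w: "?H z w" "?H w b"
        using gdist_le2[OF Hcon Zp(2)[OF z] wk(7) le2[OF z]] zb[OF z] by blast
      have bw: "tadj b w" using w(2) Hsym Hnl[OF nlb] by blast
      have wV: "w \<in> V" using bw inV by blast
      have wa: "w \<noteq> a"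
      proof
        assume "w = a"
        then have "tadj a z" using w(1) Hsym Hnl[OF nla] by blast
        then have "z \<in> {x, b}" using NA Zp[OF z] by (auto simp: neighbors_def)
        then show False using Zp[OF z] zb[OF z] by auto
      qed
      have wx: "w \<noteq> x" using bw nxb sym by blast
      have wz: "w \<noteq> z" using w(1) by (auto simp: halin_adj_def)
      have nzw: "\<not> tadj z w"
      proof
        assume "tadj z w"
        then have "is_cycle V tadj [x, a, b, w, z]"
          using wk xV wV Zp[OF z] zb[OF z] xb xa ab wa wx wz bw sym irr
          by (auto simp: is_cycle_def walk_Cons)
        then show False using acyc by blast
      qed
      then have nlzw: "next_leaf V tadj rot z w \<or> next_leaf V tadj rot w z" using w(1) by (simp add: halin_adj_def)
      then have "w \<in> L" using wV by (auto simp: next_leaf_def L_def)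
      moreover have "w \<notin> ell ` Z"
      proof
        assume "w \<in> ell ` Z"
        then obtain z' where z': "z' \<in> Z" "w = ell z'" by blast
        have "nbw tadj (x # a # b # [w])" using wk xb wa bw by simp
        then show False using ell_ne[OF z'(1) _ _ wk(7), of "[w]"] z' wV by simp
      qed
      ultimately have "w = lb" using Leq by auto
      then show ?thesis using nlzw by auto
    qed
    define A where "A = {z \<in> Z. next_leaf V tadj rot lb z}"
    define B where "B = {z \<in> Z. next_leaf V tadj rot z lb}"
    have fA: "finite A" "finite B" using finZ by (auto simp: A_def B_def)
    have "\<forall>u\<in>A. \<forall>v\<in>A. u = v" using next_leaf_fun[OF sg] by (auto simp: A_def)
    then have "card A \<le> 1" using card_le_Suc0_iff_eq[OF fA(1)] by simp
    moreover have "\<forall>u\<in>B. \<forall>v\<in>B. u = v" using next_leaf_inj[OF sg rs] by (auto simp: B_def)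
    then have "card B \<le> 1" using card_le_Suc0_iff_eq[OF fA(2)] by simp
    moreover have "Z \<subseteq> A \<union> B" using nl by (auto simp: A_def B_def)
    then have "card Z \<le> card (A \<union> B)" by (rule card_mono[rotated]) (auto simp: A_def B_def finZ)
    moreover have "card (A \<union> B) \<le> card A + card B" by (rule card_Un_le)
    ultimately show False using cardZ D4 by linarith
  qed
  then obtain z0 where z0: "z0 \<in> Z" "3 \<le> gdist V ?H z0 b" by blast
  have fz0: "f z0 = 3" using z0 by (simp add: f_def)
  have lip: "f u - f w \<le> real (gdist V ?H u w)" if "u \<in> V" "w \<in> V" for u w
  proof -
    have "gdist V ?H u b \<le> gdist V ?H u w + gdist V ?H w b" using gdist_tri[OF Hcon that wk(7)] .
    then have "min 3 (gdist V ?H u b) \<le> min 3 (gdist V ?H w b) + gdist V ?H u w" by linarith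
    then show ?thesis unfolding f_def by linarith
  qed
  have sumZ: "2 * real D - 1 \<le> (\<Sum>z\<in>Z. f z)"
  proof -
    have "(\<Sum>z\<in>Z. f z) = f z0 + (\<Sum>z\<in>Z - {z0}. f z)" using finZ z0(1) by (simp add: sum.remove)
    moreover have "(\<Sum>z\<in>Z - {z0}. (2::real)) \<le> (\<Sum>z\<in>Z - {z0}. f z)" using fz by (intro sum_mono) auto
    moreover have "(\<Sum>z\<in>Z - {z0}. (2::real)) = 2 * real (D - 2)" using cardZ z0(1) finZ D4 by simp
    ultimately show ?thesis using fz0 D4 by (simp add: of_nat_diff)
  qed
  have low: "1 \<le> cost V ?H \<pi>" if al: "0 \<le> \<alpha>" "\<alpha> < 1"
    and cp: "is_coupling V (lazy_measure V ?H \<alpha> x) (lazy_measure V ?H \<alpha> a) \<pi>" for \<alpha> \<pi>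
  proof -
    have cl: "(\<Sum>u\<in>V. lazy_measure V ?H \<alpha> x u * f u) - (\<Sum>w\<in>V. lazy_measure V ?H \<alpha> a w * f w) \<le> cost V ?H \<pi>"
      by (rule cost_lower[OF cp fin lip])
    have NXe: "NX = insert a Z" using aNX by (auto simp: Z_def)
    have s1: "(\<Sum>u\<in>V. lazy_measure V ?H \<alpha> x u * f u) = \<alpha> * 2 + (1 - \<alpha>) / real D * (1 + (\<Sum>z\<in>Z. f z))"
    proof -
      have aZ: "a \<notin> Z" by (simp add: Z_def)
      have "(\<Sum>u\<in>neighbors V ?H x. f u) = 1 + (\<Sum>z\<in>Z. f z)"
        unfolding NHx NXe using finZ aZ fa by simp
      then show ?thesis using sum_lazy_f[OF Hsg xV, of \<alpha> f] dHx fx by simp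
    qed
    have s2: "(\<Sum>u\<in>V. lazy_measure V ?H \<alpha> a u * f u) = \<alpha> * 1 + (1 - \<alpha>) / 2 * 2"
      using sum_lazy_f[OF Hsg wk(6)] NHa dHa xb fx fa fb by simp
    have Dp: "0 < real D" using D4 by simp
    have "(1 - \<alpha>) / real D * (2 * real D) \<le> (1 - \<alpha>) / real D * (1 + (\<Sum>z\<in>Z. f z))"
      using sumZ al Dp by (intro mult_left_mono) auto
    moreover have "(1 - \<alpha>) / real D * (2 * real D) = 2 * (1 - \<alpha>)" using Dp by simp
    ultimately have T: "2 * (1 - \<alpha>) \<le> (1 - \<alpha>) / real D * (1 + (\<Sum>z\<in>Z. f z))" by simp
    have s2': "(\<Sum>u\<in>V. lazy_measure V ?H \<alpha> a u * f u) = 1" using s2 by (simp add: field_simps)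
    have "\<alpha> * 2 + (1 - \<alpha>) / real D * (1 + (\<Sum>z\<in>Z. f z)) - 1 \<le> cost V ?H \<pi>"
      using cl unfolding s1 s2' .
    moreover have gen: "1 \<le> c" if "\<alpha> * 2 + q - 1 \<le> c" "2 * (1 - \<alpha>) \<le> q" for q c :: real
      using that by argo
    ultimately show ?thesis using T by blast
  qed
  have "kappa_LLY V ?H x a \<le> 0"
    by (rule kappa_le0[OF Hsg xV wk(6) gxa]) (use dHx dHa D4 low in auto)
  moreover have "kappa_LLY V ?H x a > 0" using assms(2) Hxa by blast
  ultimately show False by simp
qed

end
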